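(* Let $\mathbb{F}\in\{\mathbb{R},\mathbb{C}\}$, $A\in\mathbb{F}^{m\times n}$ with $\|A\|_{\infty,col}\le1$, $\mu>0$, $x_0\in\mathbb{F}^n$ with $S=\mathrm{supp}\,x_0$ and $\#S=K$, $\epsilon\in\mathbb{F}^m$, $b=Ax_0+\epsilon$, and assume $\beta_K>0$. If $\|\epsilon\|_2<\sqrt{\mu}$ and $$|x_{0,j}|>\sqrt{\mu}+\frac{\|\epsilon\|_2}{\beta_K}\quad\text{for all }j\in S,$$ then the oracle solution $x'=x_S$ is a strict local minimizer of $\mathcal{K}_{reg}$ with $\mathrm{supp}(x')=\mathrm{supp}(x_0)$. Moreover $|x'_j|>\sqrt{\mu}$ for $j\in S$, $\|Ax'-b\|_2\le\|\epsilon\|_2$, and $\|x'-x_0\|_2\le\|\epsilon\|_2/\beta_K$.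
   Context: $\|A\|_{\infty,col}=\max_i\|a_i\|_2$ over the columns $a_i$ of $A$. $\mathrm{card}(x)$ is the number of nonzero entries; $\beta_k=\inf\{\|Ax\|_2/\|x\|_2:x\ne0,\ \mathrm{card}(x)\le k\}$. $\mathcal{K}_{reg}(x)=\mathcal{Q}_2(\mu\,\mathrm{card})(x)+\|Ax-b\|_2^2$ with $\mathcal{Q}_2(\mu\,\mathrm{card})(x)=\sum_{j=1}^n\big(\mu-(\max\{\sqrt{\mu}-|x_j|,0\})^2\big)$. $A_S$ denotes $A$ with all columns with index outside $S$ set to zero, and the oracle solution is $x_S=(A_S^*A_S)^\dagger A_S^*b$ (the least squares solution of $A_Sx=b$ supported in $S$), where $\dagger$ is the Moore–Penrose inverse and $A^*$ the conjugate transpose. *)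

theory Defs
  imports "HOL-Analysis.Analysis" "HOL-Library.Extended_Real"
begin

text \<open>Scalar field F in {R, C}: a normed field with a conjugation satisfying
  x * cnjg x = |x|^2.  Its instances are exactly (up to isomorphism) R (cnjg = id)
  and C (cnjg = complex conjugation).\<close>

class rclike = real_normed_field +
  fixes cnjg :: "'a \<Rightarrow> 'a"
  assumes cnjg_add: "cnjg (x + y) = cnjg x + cnjg y"
    and cnjg_mult: "cnjg (x * y) = cnjg x * cnjg y"
    and cnjg_cnjg: "cnjg (cnjg x) = x"
    and cnjg_scaleR: "cnjg (r *\<^sub>R x) = r *\<^sub>R cnjg x"
    and mult_cnjg: "x * cnjg x = (norm x)\<^sup>2 *\<^sub>R 1"

instantiation real :: rclike
begin
definition cnjg_real :: "real \<Rightarrow> real" where "cnjg_real x = x"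
instance by standard (simp_all add: cnjg_real_def power2_eq_square)
end

instantiation complex :: rclike
begin
definition cnjg_complex :: "complex \<Rightarrow> complex" where "cnjg_complex = cnj"
instance by standard (simp_all add: cnjg_complex_def complex_mult_cnj scaleR_conv_of_real cmod_power2 flip: of_real_power of_real_add)
end

definition ctrans :: "'a::rclike^'n^'m \<Rightarrow> 'a^'m^'n" where
  "ctrans A = (\<chi> j i. cnjg (A $ i $ j))"

definition pinv :: "'a::rclike^'n^'m \<Rightarrow> 'a^'m^'n" where
  "pinv A = (THE X. A ** X ** A = A \<and> X ** A ** X = X \<and>
                    ctrans (A ** X) = A ** X \<and> ctrans (X ** A) = X ** A)"

definition supp :: "'a::zero^'n \<Rightarrow> 'n set" where
  "supp x = {j. x $ j \<noteq> 0}"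

definition cardv :: "'a::zero^'n \<Rightarrow> nat" where
  "cardv x = card (supp x)"

definition colnorm_max :: "'a::real_normed_vector^'n^'m \<Rightarrow> real" where
  "colnorm_max A = Max (range (\<lambda>j. norm (column j A)))"

text \<open>beta_k (as an extended real, so that the infimum over the empty set, k = 0, is +infinity)\<close>
definition beta :: "nat \<Rightarrow> 'a::rclike^'n^'m \<Rightarrow> ereal" where
  "beta k A = (INF x\<in>{x. x \<noteq> 0 \<and> cardv x \<le> k}. ereal (norm (A *v x) / norm x))"

definition restrict_cols :: "'a::zero^'n^'m \<Rightarrow> 'n set \<Rightarrow> 'a^'n^'m" where
  "restrict_cols A S = (\<chi> i j. if j \<in> S then A $ i $ j else 0)"

definition oracle_sol :: "'a::rclike^'n^'m \<Rightarrow> 'n set \<Rightarrow> 'a^'m \<Rightarrow> 'a^'n" where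
  "oracle_sol A S b = pinv (ctrans (restrict_cols A S) ** restrict_cols A S)
                    *v (ctrans (restrict_cols A S) *v b)"

definition Q2card :: "real \<Rightarrow> 'a::real_normed_vector^'n \<Rightarrow> real" where
  "Q2card \<mu> x = (\<Sum>j\<in>UNIV. \<mu> - (max (sqrt \<mu> - norm (x $ j)) 0)\<^sup>2)"

definition Kreg :: "real \<Rightarrow> 'a::rclike^'n^'m \<Rightarrow> 'a^'m \<Rightarrow> 'a^'n \<Rightarrow> real" where
  "Kreg \<mu> A b x = Q2card \<mu> x + (norm (A *v x - b))\<^sup>2"

definition strict_local_min :: "('v::metric_space \<Rightarrow> real) \<Rightarrow> 'v \<Rightarrow> bool" where
  "strict_local_min f x0 \<longleftrightarrow> (\<exists>\<delta>>0. \<forall>x. x \<noteq> x0 \<and> dist x x0 < \<delta> \<longrightarrow> f x0 < f x)"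

end

theory Submission
  imports Defs
begin


lemma cnjg_zero[simp]: "cnjg (0::'a::rclike) = 0"
  by (metis add_cancel_right_right add_0 cnjg_add)

lemma cnjg_one[simp]: "cnjg (1::'a::rclike) = 1"
  using mult_cnjg[of "1::'a"] by simp

lemma cnjg_minus[simp]: "cnjg (- x::'a::rclike) = - cnjg x"
  by (metis add_eq_0_iff2 cnjg_add cnjg_zero add.commute)

lemma cnjg_diff[simp]: "cnjg (x - y::'a::rclike) = cnjg x - cnjg y"
  by (metis cnjg_add cnjg_minus diff_conv_add_uminus)

lemma cnjg_sum: "cnjg (sum f A :: 'a::rclike) = sum (\<lambda>i. cnjg (f i)) A"
  by (induction A rule: infinite_finite_induct) (auto simp: cnjg_add)

lemma mult_cnjg': "x * cnjg x = of_real ((norm (x::'a::rclike))\<^sup>2)"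
  by (simp add: mult_cnjg of_real_def)

definition ipv :: "'a::rclike^'n::finite \<Rightarrow> 'a^'n \<Rightarrow> 'a" where
  "ipv u v = (\<Sum>i\<in>UNIV. cnjg (u$i) * v$i)"

lemma norm_vec_sq: "(norm (u::'a::real_normed_vector^'n::finite))\<^sup>2 = (\<Sum>i\<in>UNIV. (norm (u$i))\<^sup>2)"
  by (simp add: norm_vec_def L2_set_def sum_nonneg)

lemma ipv_self: "ipv u u = of_real ((norm u)\<^sup>2)"
proof -
  have "ipv u u = (\<Sum>i\<in>UNIV. of_real ((norm (u$i))\<^sup>2))"
    unfolding ipv_def by (intro sum.cong refl) (metis mult.commute mult_cnjg')
  also have "\<dots> = of_real ((norm u)\<^sup>2)" by (simp add: norm_vec_sq)
  finally show ?thesis .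
qed

lemma ipv_swap: "ipv v u = cnjg (ipv u v)"
  unfolding ipv_def cnjg_sum by (simp add: cnjg_mult cnjg_cnjg mult.commute)

lemma ipv_adj: "ipv u (ctrans B *v z) = ipv (B *v u) z"
proof -
  have "ipv u (ctrans B *v z) = (\<Sum>j\<in>UNIV. \<Sum>i\<in>UNIV. cnjg (u$j) * (cnjg (B$i$j) * z$i))"
    unfolding ipv_def matrix_vector_mult_def ctrans_def by (simp add: sum_distrib_left)
  also have "\<dots> = (\<Sum>i\<in>UNIV. \<Sum>j\<in>UNIV. cnjg (u$j) * (cnjg (B$i$j) * z$i))"
    by (rule sum.swap)
  also have "\<dots> = ipv (B *v u) z"
    unfolding ipv_def matrix_vector_mult_def
    by (simp add: cnjg_sum sum_distrib_left sum_distrib_right cnjg_mult mult_ac)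
  finally show ?thesis .
qed

lemma ipv_add: "ipv (u + v) (u + v) = ipv u u + ipv u v + ipv v u + ipv v v"
  unfolding ipv_def by (simp add: cnjg_add algebra_simps sum.distrib)

lemma pyth:
  fixes u v :: "'a::rclike^'n::finite"
  assumes "ipv u v = 0"
  shows "(norm (u + v))\<^sup>2 = (norm u)\<^sup>2 + (norm v)\<^sup>2"
proof -
  have "ipv v u = 0" using assms ipv_swap[of v u] by simp
  then have "(of_real ((norm (u + v))\<^sup>2) :: 'a) = of_real ((norm u)\<^sup>2 + (norm v)\<^sup>2)"
    using ipv_add[of u v] assms by (simp add: ipv_self)
  then show ?thesis using of_real_eq_iff by blast
qed



lemma ctrans_mult: "ctrans (A ** B) = ctrans B ** ctrans (A::'a::rclike^'n::finite^'m::finite)"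
  unfolding ctrans_def matrix_matrix_mult_def
  by (simp add: vec_eq_iff cnjg_sum cnjg_mult mult.commute)

lemma ctrans_ctrans[simp]: "ctrans (ctrans A) = (A::'a::rclike^'n::finite^'m::finite)"
  unfolding ctrans_def by (simp add: vec_eq_iff cnjg_cnjg)

lemma penrose_unique:
  fixes A :: "'a::rclike^'n::finite^'m::finite"
  assumes "A ** X ** A = A" "X ** A ** X = X" "ctrans (A ** X) = A ** X" "ctrans (X ** A) = X ** A"
      and "A ** Y ** A = A" "Y ** A ** Y = Y" "ctrans (A ** Y) = A ** Y" "ctrans (Y ** A) = Y ** A"
  shows "X = Y"
proof -
  have "X = X ** (A ** X)" using assms(2) by (simp add: matrix_mul_assoc)
  also have "\<dots> = X ** ctrans (A ** X)" using assms(3) by simp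
  also have "\<dots> = X ** ctrans X ** ctrans A" by (simp add: ctrans_mult matrix_mul_assoc)
  also have "\<dots> = X ** ctrans X ** ctrans (A ** Y ** A)" using assms(5) by simp
  also have "\<dots> = X ** ctrans (A ** X) ** ctrans (A ** Y)"
    by (simp add: ctrans_mult matrix_mul_assoc)
  also have "\<dots> = X ** A ** X ** A ** Y" using assms(3,7) by (simp add: matrix_mul_assoc)
  also have "\<dots> = X ** A ** Y" using assms(2) by simp
  finally have 1: "X = X ** A ** Y" .
  have "Y = (Y ** A) ** Y" using assms(6) by simp
  also have "\<dots> = ctrans (Y ** A) ** Y" using assms(8) by simp
  also have "\<dots> = ctrans A ** ctrans Y ** Y" by (simp add: ctrans_mult matrix_mul_assoc)
  also have "\<dots> = ctrans (A ** X ** A) ** ctrans Y ** Y" using assms(1) by simp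
  also have "\<dots> = ctrans (X ** A) ** ctrans (Y ** A) ** Y"
    by (simp add: ctrans_mult matrix_mul_assoc)
  also have "\<dots> = X ** A ** Y ** A ** Y" using assms(4,8) by (simp add: matrix_mul_assoc)
  also have "\<dots> = X ** A ** Y" using assms(6) by (metis matrix_mul_assoc)
  finally have 2: "Y = X ** A ** Y" .
  show ?thesis using 1 2 by simp
qed

lemma pinv_eq:
  fixes A :: "'a::rclike^'n::finite^'m::finite"
  assumes "A ** X ** A = A" "X ** A ** X = X" "ctrans (A ** X) = A ** X" "ctrans (X ** A) = X ** A"
  shows "pinv A = X"
  unfolding pinv_def
  apply (rule the_equality)
  using assms apply blast
  using penrose_unique assms by blast

definition Pm :: "'n::finite set \<Rightarrow> 'a::rclike^'n^'n" where
  "Pm S = (\<chi> i j. if i = j \<and> j \<in> S then 1 else 0)"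
definition Qm :: "'n::finite set \<Rightarrow> 'a::rclike^'n^'n" where
  "Qm S = (\<chi> i j. if i = j \<and> j \<notin> S then 1 else 0)"

lemma sum_diagL: "(\<Sum>k\<in>(UNIV::'n::finite set). (if j = k \<and> P k then 1 else 0) * (f k::'a::semiring_1)) = (if P j then f j else 0)"
proof -
  have "(\<Sum>k\<in>(UNIV::'n set). (if j = k \<and> P k then 1 else 0) * f k) = (\<Sum>k\<in>UNIV. if k = j then (if P j then f j else 0) else 0)"
    by (rule sum.cong) auto
  then show ?thesis by simp
qed
lemma sum_diagR: "(\<Sum>k\<in>(UNIV::'n::finite set). (f k::'a::semiring_1) * (if k = j \<and> P k then 1 else 0)) = (if P j then f j else 0)"
proof -
  have "(\<Sum>k\<in>(UNIV::'n set). f k * (if k = j \<and> P k then 1 else 0)) = (\<Sum>k\<in>UNIV. if k = j then (if P j then f j else 0) else 0)"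
    by (rule sum.cong) auto
  then show ?thesis by simp
qed

lemma Pm_vec: "(Pm S *v v) $ j = (if j \<in> S then v $ j else 0)"
  unfolding Pm_def matrix_vector_mult_def by (simp add: sum_diagL)
lemma Qm_vec: "(Qm S *v v) $ j = (if j \<notin> S then v $ j else 0)"
  unfolding Qm_def matrix_vector_mult_def by (simp add: sum_diagL)

lemma restrict_Pm: "restrict_cols A S = A ** Pm S"
  unfolding restrict_cols_def Pm_def matrix_matrix_mult_def
  by (simp add: vec_eq_iff sum_diagR)

lemma ctrans_Pm: "ctrans (Pm S) = Pm S"
  unfolding ctrans_def Pm_def by (auto simp: vec_eq_iff)

lemma PP: "Pm S ** Pm S = Pm S"
  unfolding Pm_def matrix_matrix_mult_def by (simp add: vec_eq_iff sum_diagL)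
lemma QQ: "Qm S ** Qm S = Qm S"
  unfolding Qm_def matrix_matrix_mult_def by (simp add: vec_eq_iff sum_diagL)
lemma PQ: "Pm S ** Qm S = 0"
  unfolding Qm_def Pm_def matrix_matrix_mult_def by (simp add: vec_eq_iff sum_diagL)
lemma QP: "Qm S ** Pm S = 0"
  unfolding Qm_def Pm_def matrix_matrix_mult_def by (simp add: vec_eq_iff sum_diagL)
lemma PplusQ: "Pm S + Qm S = mat 1"
  unfolding Qm_def Pm_def mat_def by (auto simp: vec_eq_iff)


lemma matrix_add_rdistrib': "((B + C) ** A) = (B ** A) + (C ** A)"
  by (vector matrix_matrix_mult_def sum.distrib[symmetric] field_simps)
lemma matrix_sub_ldistrib': "(A::'a::ring_1^'n^'m) ** (B - C) = (A ** B) - (A ** C)"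
  by (vector matrix_matrix_mult_def sum_subtractf[symmetric] field_simps)
lemma matrix_sub_rdistrib': "((B - C) ** (A::'a::ring_1^'n^'m)) = (B ** A) - (C ** A)"
  by (vector matrix_matrix_mult_def sum_subtractf[symmetric] field_simps)

lemma oracle_props:
  fixes A :: "'a::rclike^'n::finite^'m::finite" and b :: "'a^'m"
  assumes inj: "\<forall>v. (\<forall>j. j \<notin> S \<longrightarrow> v$j = 0) \<longrightarrow> A *v v = 0 \<longrightarrow> v = 0"
  shows "\<forall>j. j \<notin> S \<longrightarrow> oracle_sol A S b $ j = 0"
    and "\<forall>v. (\<forall>j. j \<notin> S \<longrightarrow> v$j = 0) \<longrightarrow> ipv (A *v v) (A *v oracle_sol A S b - b) = 0"
proof -
  define P :: "'a^'n^'n" where "P = Pm S"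
  define Q :: "'a^'n^'n" where "Q = Qm S"
  define AS where "AS = restrict_cols A S"
  define G where "G = ctrans A ** A"
  define M where "M = ctrans AS ** AS"
  have AS: "AS = A ** P" by (simp add: AS_def P_def restrict_Pm)
  have M: "M = P ** G ** P"
    by (simp add: M_def AS G_def ctrans_mult P_def ctrans_Pm matrix_mul_assoc)
  have PP': "P ** P = P" and QQ': "Q ** Q = Q" and PQ': "P ** Q = 0" and QP': "Q ** P = 0"
    and PQ1: "P + Q = mat 1"
    by (simp_all add: P_def Q_def PP QQ PQ QP PplusQ)
  have ctP: "ctrans P = P" by (simp add: P_def ctrans_Pm)
  have MQ: "M ** Q = 0" by (simp add: M flip: matrix_mul_assoc add: PQ')
  have QM: "Q ** M = 0" by (simp add: M matrix_mul_assoc QP')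
  have PM: "P ** M = M" by (simp add: M matrix_mul_assoc PP')
  have MP: "M ** P = M" by (metis M PP' matrix_mul_assoc)
  have Pv: "P *v v = v" if "\<forall>j. j \<notin> S \<longrightarrow> v$j = 0" for v
    using that by (simp add: vec_eq_iff P_def Pm_vec)
  have Pv_supp: "\<forall>j. j \<notin> S \<longrightarrow> (P *v v)$j = 0" for v by (simp add: P_def Pm_vec)
  define N where "N = M + Q"
  have injN: "\<forall>y. N *v y = 0 \<longrightarrow> y = 0"
  proof (intro allI impI)
    fix y assume Ny: "N *v y = 0"
    have "M *v y = P *v (N *v y)"
      by (simp add: N_def matrix_vector_mul_assoc matrix_add_ldistrib PM PQ')
    then have My: "M *v y = 0" using Ny by simp
    have "Q *v y = N *v y - M *v y" by (simp add: N_def matrix_vector_mult_add_rdistrib)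
    then have Qy: "Q *v y = 0" using Ny My by simp
    have yP: "P *v y = y"
      by (metis PQ1 Qy add.right_neutral matrix_vector_mul_lid matrix_vector_mult_add_rdistrib)
    have "of_real ((norm (AS *v y))\<^sup>2) = ipv (AS *v y) (AS *v y)" by (simp add: ipv_self)
    also have "\<dots> = ipv y (M *v y)" by (simp add: ipv_adj M_def flip: matrix_vector_mul_assoc)
    also have "\<dots> = 0" by (simp add: My ipv_def)
    finally have "AS *v y = 0" by simp
    moreover have "AS *v y = A *v (P *v y)"
      by (simp add: AS matrix_vector_mul_assoc)
    ultimately have "A *v y = 0" using yP by simp
    moreover have "\<forall>j. j \<notin> S \<longrightarrow> y$j = 0" using Pv_supp[of y] yP by simp
    ultimately show "y = 0" using inj by blast
  qed
  obtain B where BN: "B ** N = mat 1" using matrix_left_invertible_ker[THEN iffD2, OF injN] by blast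
  have NB: "N ** B = mat 1" using matrix_left_right_inverse[of N B] BN by simp
  have QB: "Q ** B = Q"
  proof -
    have "Q ** N = Q" by (simp add: N_def matrix_add_ldistrib QM QQ')
    then have "Q ** B = Q ** N ** B" by simp
    also have "\<dots> = Q" by (simp add: NB flip: matrix_mul_assoc)
    finally show ?thesis .
  qed
  have BQ: "B ** Q = Q"
  proof -
    have "N ** Q = Q" by (simp add: N_def matrix_add_rdistrib' MQ QQ')
    then have "B ** Q = B ** N ** Q" by (metis matrix_mul_assoc)
    also have "\<dots> = Q" by (simp add: BN)
    finally show ?thesis .
  qed
  define X where "X = B - Q"
  have MX: "M ** X = P"
  proof -
    have "M ** B + Q = P + Q" using NB QB PQ1 by (simp add: N_def matrix_add_rdistrib')
    then have "M ** B = P" by simp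
    then show ?thesis by (simp add: X_def matrix_sub_ldistrib' MQ)
  qed
  have XM: "X ** M = P"
  proof -
    have "B ** M + Q = P + Q" using BN BQ PQ1 by (simp add: N_def matrix_add_ldistrib)
    then have "B ** M = P" by simp
    then show ?thesis by (simp add: X_def matrix_sub_rdistrib' QM)
  qed
  have PX: "P ** X = X"
  proof -
    have "P = mat 1 - Q" using PQ1 by (metis add_diff_cancel_right')
    then have "P ** B = (mat 1 - Q) ** B" by simp
    then show ?thesis by (simp add: X_def matrix_sub_ldistrib' matrix_sub_rdistrib' QB PQ')
  qed
  have pen: "pinv M = X"
    apply (rule pinv_eq)
    subgoal by (simp add: MX PM)
    subgoal by (metis XM PX matrix_mul_assoc)
    subgoal by (simp add: MX P_def ctrans_Pm)
    subgoal by (simp add: XM P_def ctrans_Pm)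
    done
  define z where "z = ctrans AS *v b"
  have xo: "oracle_sol A S b = X *v z"
    by (simp add: oracle_sol_def pen z_def flip: AS_def M_def)
  have zP: "P *v z = z"
    using ctP by (simp add: z_def AS ctrans_mult matrix_vector_mul_assoc matrix_mul_assoc PP')
  have xP: "P *v oracle_sol A S b = oracle_sol A S b"
    by (simp add: xo matrix_vector_mul_assoc PX)
  show supp: "\<forall>j. j \<notin> S \<longrightarrow> oracle_sol A S b $ j = 0"
    by (metis Pv_supp xP)
  have normal: "ctrans AS *v (AS *v oracle_sol A S b - b) = 0"
  proof -
    have "ctrans AS *v (AS *v oracle_sol A S b) = M *v oracle_sol A S b"
      by (simp add: M_def matrix_vector_mul_assoc)
    also have "\<dots> = z" by (simp add: xo matrix_vector_mul_assoc MX zP)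
    finally show ?thesis by (simp add: matrix_vector_mult_diff_distrib z_def)
  qed
  have ASx: "AS *v oracle_sol A S b = A *v oracle_sol A S b"
    by (metis AS matrix_vector_mul_assoc xP)
  show "\<forall>v. (\<forall>j. j \<notin> S \<longrightarrow> v$j = 0) \<longrightarrow> ipv (A *v v) (A *v oracle_sol A S b - b) = 0"
  proof (intro allI impI)
    fix v :: "'a^'n" assume "\<forall>j. j \<notin> S \<longrightarrow> v$j = 0"
    then have "A *v v = AS *v v" by (metis AS Pv matrix_vector_mul_assoc)
    then have "ipv (A *v v) (A *v oracle_sol A S b - b) = ipv v (ctrans AS *v (AS *v oracle_sol A S b - b))"
      by (simp add: ipv_adj ASx)
    also have "\<dots> = 0" by (simp add: normal ipv_def)
    finally show "ipv (A *v v) (A *v oracle_sol A S b - b) = 0" .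
  qed
qed



lemma norm_smult_vec: "norm (c *s (v::'a::real_normed_field^'n::finite)) = norm c * norm v"
proof -
  have "norm (c *s v) = L2_set (\<lambda>i. norm c * norm (v$i)) UNIV"
    unfolding norm_vec_def by (simp add: norm_mult)
  also have "\<dots> = norm c * norm v"
    unfolding norm_vec_def by (simp add: L2_set_right_distrib)
  finally show ?thesis .
qed

lemma norm_Av_le:
  fixes A :: "'a::rclike^'n::finite^'m::finite"
  assumes "colnorm_max A \<le> 1"
  shows "norm (A *v w) \<le> (\<Sum>j\<in>UNIV. norm (w$j))"
proof -
  have col: "norm (column j A) \<le> 1" for j
  proof -
    have "norm (column j A) \<le> colnorm_max A"
      unfolding colnorm_max_def by (rule Max_ge) auto
    then show ?thesis using assms by simp
  qed
  have "norm (A *v w) = norm (\<Sum>j\<in>UNIV. (w$j) *s column j A)"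
    by (simp add: matrix_mult_sum)
  also have "\<dots> \<le> (\<Sum>j\<in>UNIV. norm ((w$j) *s column j A))"
    by (rule norm_sum)
  also have "\<dots> \<le> (\<Sum>j\<in>UNIV. norm (w$j))"
    by (rule sum_mono) (simp add: norm_smult_vec, metis col mult_left_le norm_ge_zero)
  finally show ?thesis .
qed

lemma phi_lb:
  fixes s t :: real
  assumes "s \<ge> 0" "t \<ge> 0"
  shows "2 * s * t - t\<^sup>2 \<le> s\<^sup>2 - (max (s - t) 0)\<^sup>2"
proof (cases "s - t \<ge> 0")
  case True
  then show ?thesis by (simp add: power2_eq_square algebra_simps)
next
  case False
  have "0 \<le> (t - s)\<^sup>2" by simp
  then show ?thesis using False by (simp add: power2_eq_square algebra_simps)
qed



lemma slm_lemma:
  fixes A :: "'a::rclike^'n::finite^'m::finite" and b :: "'a^'m" and xs :: "'a^'n"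
    and S :: "'n set" and \<mu> e :: real
  assumes colA: "colnorm_max A \<le> 1" and mupos: "\<mu> > 0"
    and rle: "norm (A *v xs - b) \<le> e" and esm: "e < sqrt \<mu>"
    and xsS: "\<forall>j. j \<notin> S \<longrightarrow> xs$j = 0"
    and xs_big: "\<forall>j\<in>S. norm (xs $ j) > sqrt \<mu>"
    and orth: "\<And>v. \<forall>j. j \<notin> S \<longrightarrow> v$j = 0 \<Longrightarrow> ipv (A *v v) (A *v xs - b) = 0"
    and injS: "\<forall>v. (\<forall>j. j \<notin> S \<longrightarrow> v$j = 0) \<longrightarrow> A *v v = 0 \<longrightarrow> v = 0"
  shows "strict_local_min (Kreg \<mu> A b) xs"
proof -
  define r where "r = A *v xs - b"
  define R where "R = norm r"
  define d where "d = sqrt \<mu> - e"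
  have dpos: "d > 0" using esm by (simp add: d_def)
  have R0: "R \<ge> 0" by (simp add: R_def)
  have Rle: "R \<le> sqrt \<mu> - d" using rle by (simp add: R_def r_def d_def)
  define D where "D = insert d ((\<lambda>j. norm (xs$j) - sqrt \<mu>) ` S)"
  define \<delta> where "\<delta> = Min D"
  have finD: "finite D" "D \<noteq> {}" by (auto simp: D_def)
  have \<delta>pos: "\<delta> > 0"
    unfolding \<delta>_def using finD dpos xs_big by (auto simp: Min_gr_iff D_def)
  have \<delta>d: "\<delta> \<le> d" unfolding \<delta>_def using finD by (auto simp: D_def)
  have \<delta>S: "\<delta> \<le> norm (xs$j) - sqrt \<mu>" if "j \<in> S" for j
    unfolding \<delta>_def using finD that by (auto simp: D_def)
  have sq: "(sqrt \<mu>)\<^sup>2 = \<mu>" using mupos by simp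
  have sqpos: "sqrt \<mu> > 0" using mupos by simp
  have pyth_r: "(norm (A *v v + r))\<^sup>2 = (norm (A *v v))\<^sup>2 + R\<^sup>2"
    if "\<forall>j. j \<notin> S \<longrightarrow> v$j = 0" for v
    using pyth[OF orth[OF that]] by (simp add: r_def R_def)
  show ?thesis
    unfolding strict_local_min_def
  proof (intro exI[of _ \<delta>] conjI allI impI)
    show "\<delta> > 0" by (rule \<delta>pos)
    fix x assume "x \<noteq> xs \<and> dist x xs < \<delta>"
    then have xne: "x \<noteq> xs" and xd: "norm (x - xs) < \<delta>" by (auto simp: dist_norm)
    have hj: "norm ((x - xs)$j) < \<delta>" for j
      using Finite_Cartesian_Product.norm_nth_le[of "x - xs" j] xd by simp
    define w :: "'a^'n" where "w = (\<chi> j. if j \<in> S then 0 else x$j)"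
    define u where "u = x - w"
    define t where "t j = norm (w$j)" for j
    define s where "s = (\<Sum>j\<in>UNIV. t j)"
    have t0: "t j \<ge> 0" for j by (simp add: t_def)
    have tS: "t j = 0" if "j \<in> S" for j using that by (simp add: t_def w_def)
    have tnS: "t j = norm (x$j)" if "j \<notin> S" for j using that by (simp add: t_def w_def)
    have tle: "t j \<le> \<delta>" for j
    proof (cases "j \<in> S")
      case True then show ?thesis using tS \<delta>pos by simp
    next
      case False then show ?thesis using tnS[OF False] hj[of j] xsS by simp
    qed
    have uS: "\<forall>j. j \<notin> S \<longrightarrow> u$j = 0" by (simp add: u_def w_def)
    define \<phi> where "\<phi> y = \<mu> - (max (sqrt \<mu> - y) 0)\<^sup>2" for y :: real
    have Q2: "Q2card \<mu> z = (\<Sum>j\<in>UNIV. \<phi> (norm (z$j)))" for z :: "'a^'n"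
      by (simp add: Q2card_def \<phi>_def)
    have phij: "\<phi> (norm (x$j)) - \<phi> (norm (xs$j)) \<ge> 2 * sqrt \<mu> * t j - (t j)\<^sup>2" for j
    proof (cases "j \<in> S")
      case True
      have "norm (xs$j) \<le> norm (x$j) + norm ((x - xs)$j)"
        using norm_triangle_ineq4[of "x$j" "(x - xs)$j"] by simp
      then have "norm (x$j) > sqrt \<mu>" using hj[of j] \<delta>S[OF True] by simp
      moreover have "norm (xs$j) > sqrt \<mu>" using xs_big True by simp
      ultimately show ?thesis using tS[OF True] by (simp add: \<phi>_def)
    next
      case False
      have "\<phi> (norm (xs$j)) = 0" using xsS False sq sqpos by (simp add: \<phi>_def)
      moreover have "\<phi> (t j) \<ge> 2 * sqrt \<mu> * t j - (t j)\<^sup>2"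
        using phi_lb[of "sqrt \<mu>" "t j"] sqpos t0[of j] sq by (simp add: \<phi>_def)
      ultimately show ?thesis using tnS[OF False] by simp
    qed
    have Qd: "Q2card \<mu> x - Q2card \<mu> xs \<ge> (\<Sum>j\<in>UNIV. 2 * sqrt \<mu> * t j - (t j)\<^sup>2)"
      unfolding Q2 sum_subtractf[symmetric] by (rule sum_mono) (use phij in auto)
    have Ax: "A *v x - b = (A *v (u - xs) + r) + A *v w"
      by (simp add: u_def r_def matrix_vector_mult_diff_distrib)
    have Aw: "norm (A *v w) \<le> s"
      using norm_Av_le[OF colA, of w] by (simp add: s_def t_def)
    have uxsS: "\<forall>j. j \<notin> S \<longrightarrow> (u - xs)$j = 0" using uS xsS by simp
    have Au: "(norm (A *v (u - xs) + r))\<^sup>2 = (norm (A *v (u - xs)))\<^sup>2 + R\<^sup>2"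
      by (rule pyth_r[OF uxsS])
    have Kx: "Kreg \<mu> A b x = Q2card \<mu> x + (norm (A *v x - b))\<^sup>2" by (simp add: Kreg_def)
    have Kxs: "Kreg \<mu> A b xs = Q2card \<mu> xs + R\<^sup>2" by (simp add: Kreg_def R_def r_def)
    show "Kreg \<mu> A b xs < Kreg \<mu> A b x"
    proof (cases "w = 0")
      case True
      then have ux: "u = x" by (simp add: u_def)
      have "t j = 0" for j using True by (simp add: t_def)
      then have "Q2card \<mu> x - Q2card \<mu> xs \<ge> 0" using Qd by simp
      moreover have "u - xs \<noteq> 0" using xne ux by simp
      then have "A *v (u - xs) \<noteq> 0" using injS uxsS by blast
      then have "(norm (A *v x - b))\<^sup>2 > R\<^sup>2"
        using Au Ax True ux by simp
      ultimately show ?thesis using Kx Kxs by simp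
    next
      case False
      then obtain j where "w$j \<noteq> 0" by (auto simp: vec_eq_iff)
      then have "t j > 0" by (simp add: t_def)
      then have spos: "s > 0" unfolding s_def
        by (intro sum_pos2[where i=j]) (auto simp: t0)
      have "norm (A *v (u - xs) + r) \<ge> R"
        using Au by (metis le_add_same_cancel2 norm_ge_zero power2_le_imp_le zero_le_power2)
      moreover have "norm (A *v x - b) \<ge> norm (A *v (u - xs) + r) - s"
        using Aw norm_diff_ineq[of "A *v (u - xs) + r" "A *v w"] Ax by simp
      ultimately have N1: "norm (A *v x - b) \<ge> R - s" by simp
      have N2: "(norm (A *v x - b))\<^sup>2 \<ge> R\<^sup>2 - 2 * R * s"
      proof (cases "R - s \<ge> 0")
        case True
        then have "(R - s)\<^sup>2 \<le> (norm (A *v x - b))\<^sup>2" using N1 by (intro power_mono) auto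
        moreover have "(R - s)\<^sup>2 \<ge> R\<^sup>2 - 2 * R * s" by (simp add: power2_eq_square algebra_simps)
        ultimately show ?thesis by simp
      next
        case False
        then have "R * (R - 2 * s) \<le> 0" using R0 spos by (intro mult_nonneg_nonpos) auto
        then have "R\<^sup>2 - 2 * R * s \<le> 0" by (simp add: power2_eq_square algebra_simps)
        moreover have "(norm (A *v x - b))\<^sup>2 \<ge> 0" by simp
        ultimately show ?thesis by linarith
      qed
      have termj: "2 * sqrt \<mu> * t j - (t j)\<^sup>2 - 2 * R * t j \<ge> d * t j" for j
      proof -
        have "2 * sqrt \<mu> - 2 * R - t j - d \<ge> 0" using Rle tle[of j] \<delta>d by simp
        then have "t j * (2 * sqrt \<mu> - 2 * R - t j - d) \<ge> 0" using t0 by simp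
        then show ?thesis by (simp add: power2_eq_square algebra_simps)
      qed
      have "(\<Sum>j\<in>UNIV. 2 * sqrt \<mu> * t j - (t j)\<^sup>2) - 2 * R * s
            = (\<Sum>j\<in>UNIV. 2 * sqrt \<mu> * t j - (t j)\<^sup>2 - 2 * R * t j)"
        by (simp add: s_def sum_subtractf sum_distrib_left)
      also have "\<dots> \<ge> (\<Sum>j\<in>UNIV. d * t j)" by (rule sum_mono) (rule termj)
      also have "(\<Sum>j\<in>UNIV. d * t j) = d * s" by (simp add: s_def sum_distrib_left)
      finally have "(\<Sum>j\<in>UNIV. 2 * sqrt \<mu> * t j - (t j)\<^sup>2) - 2 * R * s \<ge> d * s" .
      moreover have "d * s > 0" using dpos spos by simp
      ultimately show ?thesis using Kx Kxs Qd N2 by linarith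
    qed
  qed
qed


theorem proposition4p6:
  fixes A :: "'a::rclike^'n::finite^'m::finite"
    and x0 :: "'a^'n" and \<epsilon> b :: "'a^'m" and \<mu> :: real
    and S :: "'n set" and K :: nat
  assumes "colnorm_max A \<le> 1"
    and "\<mu> > 0"
    and "S = supp x0" and "K = card S"
    and "b = A *v x0 + \<epsilon>"
    and "beta K A > 0"
    and "norm \<epsilon> < sqrt \<mu>"
    and "\<forall>j\<in>S. ereal (norm (x0 $ j)) > ereal (sqrt \<mu>) + ereal (norm \<epsilon>) / beta K A"
  shows "strict_local_min (Kreg \<mu> A b) (oracle_sol A S b)
       \<and> supp (oracle_sol A S b) = supp x0
       \<and> (\<forall>j\<in>S. norm (oracle_sol A S b $ j) > sqrt \<mu>)
       \<and> norm (A *v oracle_sol A S b - b) \<le> norm \<epsilon>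
       \<and> ereal (norm (oracle_sol A S b - x0)) \<le> ereal (norm \<epsilon>) / beta K A"
proof -
  note colA = assms(1) and mupos = assms(2) and Sdef = assms(3) and Kdef = assms(4)
    and bdef = assms(5) and betapos = assms(6) and epsmall = assms(7) and big = assms(8)
  define xs where "xs = oracle_sol A S b"
  define r where "r = A *v xs - b"
  have x0S: "\<forall>j. j \<notin> S \<longrightarrow> x0$j = 0" using Sdef by (simp add: supp_def)
  have cardS: "cardv v \<le> K" if "\<forall>j. j \<notin> S \<longrightarrow> v$j = 0" for v :: "'a^'n"
  proof -
    have "supp v \<subseteq> S" using that by (auto simp: supp_def)
    then show ?thesis unfolding cardv_def Kdef by (intro card_mono) auto
  qed
  have B1: "beta K A \<le> ereal (norm (A *v v) / norm v)" if "v \<noteq> 0" "cardv v \<le> K" for v :: "'a^'n"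
    unfolding beta_def by (rule INF_lower) (use that in auto)
  have injS: "\<forall>v. (\<forall>j. j \<notin> S \<longrightarrow> v$j = 0) \<longrightarrow> A *v v = 0 \<longrightarrow> v = 0"
  proof (intro allI impI)
    fix v :: "'a^'n" assume v: "\<forall>j. j \<notin> S \<longrightarrow> v$j = 0" and Av: "A *v v = 0"
    show "v = 0"
    proof (rule ccontr)
      assume "v \<noteq> 0"
      then have "beta K A \<le> ereal 0" using B1[of v] cardS[OF v] Av by simp
      then show False using betapos by (metis zero_ereal_def not_le)
    qed
  qed
  have xsS: "\<forall>j. j \<notin> S \<longrightarrow> xs$j = 0" using oracle_props(1)[OF injS] by (simp add: xs_def)
  have orth: "ipv (A *v v) r = 0" if "\<forall>j. j \<notin> S \<longrightarrow> v$j = 0" for v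
    using oracle_props(2)[OF injS] that by (simp add: xs_def r_def)
  have pyth_r: "(norm (A *v v + r))\<^sup>2 = (norm (A *v v))\<^sup>2 + (norm r)\<^sup>2"
    if "\<forall>j. j \<notin> S \<longrightarrow> v$j = 0" for v
    using pyth[OF orth[OF that]] by simp
  have e1: "A *v (x0 - xs) + r = - \<epsilon>"
    unfolding r_def bdef matrix_vector_mult_diff_distrib by (simp add: algebra_simps)
  have dS: "\<forall>j. j \<notin> S \<longrightarrow> (x0 - xs)$j = 0" using x0S xsS by simp
  have eps_eq: "(norm \<epsilon>)\<^sup>2 = (norm (A *v (x0 - xs)))\<^sup>2 + (norm r)\<^sup>2"
    using pyth_r[OF dS] unfolding e1 norm_minus_cancel .
  have r_le: "norm r \<le> norm \<epsilon>"
  proof (rule power2_le_imp_le)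
    show "(norm r)\<^sup>2 \<le> (norm \<epsilon>)\<^sup>2" unfolding eps_eq by simp
  qed simp
  have Ah_le: "norm (A *v (x0 - xs)) \<le> norm \<epsilon>"
  proof (rule power2_le_imp_le)
    show "(norm (A *v (x0 - xs)))\<^sup>2 \<le> (norm \<epsilon>)\<^sup>2" unfolding eps_eq by simp
  qed simp
  obtain c where cdef: "ereal (norm \<epsilon>) / beta K A = ereal c" and c0: "c \<ge> 0"
    and cbound: "\<And>v. v \<noteq> 0 \<Longrightarrow> cardv v \<le> K \<Longrightarrow> norm (A *v v) \<le> norm \<epsilon> \<Longrightarrow> norm v \<le> c"
  proof (cases "beta K A")
    case (real \<beta>)
    then have bp: "\<beta> > 0" using betapos by simp
    show ?thesis
    proof (rule that[of "norm \<epsilon> / \<beta>"])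
      show "ereal (norm \<epsilon>) / beta K A = ereal (norm \<epsilon> / \<beta>)" using real bp by simp
      show "0 \<le> norm \<epsilon> / \<beta>" using bp by simp
      fix v :: "'a^'n" assume v: "v \<noteq> 0" "cardv v \<le> K" "norm (A *v v) \<le> norm \<epsilon>"
      have "\<beta> \<le> norm (A *v v) / norm v" using B1[OF v(1,2)] real by simp
      then have "\<beta> * norm v \<le> norm (A *v v)" using v(1) by (simp add: pos_le_divide_eq)
      then have "\<beta> * norm v \<le> norm \<epsilon>" using v(3) by simp
      then show "norm v \<le> norm \<epsilon> / \<beta>" using bp by (simp add: pos_le_divide_eq mult.commute)
    qed
  next
    case PInf
    show ?thesis
    proof (rule that[of 0])
      show "ereal (norm \<epsilon>) / beta K A = ereal 0" using PInf by simp
      fix v :: "'a^'n" assume v: "v \<noteq> 0" "cardv v \<le> K" "norm (A *v v) \<le> norm \<epsilon>"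
      show "norm v \<le> 0" using B1[OF v(1,2)] PInf by simp
    qed simp
  next
    case MInf
    then show ?thesis using betapos by simp
  qed
  have h0: "norm (xs - x0) \<le> c"
  proof (cases "x0 - xs = 0")
    case True then show ?thesis using c0 by simp
  next
    case False
    have "cardv (x0 - xs) \<le> K" using cardS dS by blast
    then have "norm (x0 - xs) \<le> c"
      using cbound[OF False _ Ah_le] by blast
    then show ?thesis by (simp add: norm_minus_commute)
  qed
  have xs_big: "norm (xs $ j) > sqrt \<mu>" if "j \<in> S" for j
  proof -
    have "ereal (norm (x0 $ j)) > ereal (sqrt \<mu>) + ereal c" using big that unfolding cdef by blast
    then have "norm (x0 $ j) > sqrt \<mu> + c" by simp
    moreover have "norm (x0 $ j) \<le> norm (xs $ j) + norm ((xs - x0) $ j)"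
    proof -
      have "x0 $ j = xs $ j - (xs - x0) $ j" by simp
      then show ?thesis using norm_triangle_ineq4[of "xs $ j" "(xs - x0) $ j"] by simp
    qed
    moreover have "norm ((xs - x0) $ j) \<le> norm (xs - x0)" by (rule Finite_Cartesian_Product.norm_nth_le)
    ultimately show ?thesis using h0 by simp
  qed
  have sqmu: "sqrt \<mu> > 0" using mupos by simp
  have supp_eq: "supp xs = supp x0"
  proof -
    have "supp xs = S"
    proof
      show "supp xs \<subseteq> S" using xsS by (auto simp: supp_def)
      show "S \<subseteq> supp xs"
      proof
        fix j assume "j \<in> S"
        then have "norm (xs $ j) > 0" using xs_big sqmu by force
        then show "j \<in> supp xs" by (simp add: supp_def)
      qed
    qed
    then show ?thesis using Sdef by simp
  qed
  have slm: "strict_local_min (Kreg \<mu> A b) xs"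
    by (rule slm_lemma[OF colA mupos r_le[unfolded r_def] epsmall xsS _ orth[unfolded r_def] injS])
      (use xs_big in blast)
  show ?thesis
    unfolding xs_def[symmetric] r_def[symmetric] cdef
    using slm supp_eq xs_big r_le h0 by simp
qed
end
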